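(* Let $r\in\mathbb{N}$, $w,v\in\mathbb{YF}^r$ and $l\in\mathbb{N}_0$ with $h(w,v)\ge l$. Then $$d_r(w,v,l)=d_1(s(w),s(v),l)\cdot r^{\#v-\#w-e(v[l])}.$$
   Context: Fix $r\in\mathbb{N}$. Words and statistics. Consider finite words over $\{1_1,\dots,1_r,2\}$. A letter $1_i$ is a one with digit value $1$; $2$ is a two with digit value $2$. $|x|$ is the sum of digit values, $\#x$ the number of letters, $e(x)$ the number of ones. The graph $\mathbb{YF}^r$. It is the graded graph on all finite words, graded by $|\cdot|$. From $x$ there is a downward edge to every word obtained by one of two operations: (i) delete the leftmost one; (ii) replace a $2$ lying left of the leftmost one (any $2$ if there are no ones) by $1_i$, with arbitrary $i$. For $r=1$ write $1$ for $1_1$; $\mathbb{YF}=\mathbb{YF}^1$. The map $s$ replaces every $1_i$ by $1$. Suffix notation. $h(w,v)$ is the number of letters of the longest common suffix of $w$ and $v$; $1_i\ne 1_j$ for $i\ne j$. $x[l]$ is $x$ with its last $l$ letters deleted. The restricted path count $d_r(x,y,l)$. For $x,y\in\mathbb{YF}^r$ with $h(x,y)\ge l$, let $u$ be their common suffix of $l$ letters, so $x=x'u$ and $y=y'u$. Then $d_r(x,y,l)$ is the number of downward paths in $\mathbb{YF}^r$ of the form $y=y_nu\to y_{n-1}u\to\dots\to y_mu=x$ with $|y_i|=i$ such that the words $y_i$ ($m\le i\le n$) do not all end with one and the same letter. $d_1(\cdot,\cdot,l)$ is the analogous count in $\mathbb{YF}$. *)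

theory Defs
  imports Complex_Main
begin

text \<open>Letters: One i stands for the one 1_i (with 1 \<le> i \<le> r), Two for the two.
  Words are lists of letters; the head of the list is the leftmost letter.\<close>

datatype letter = One nat | Two

definition valid_word :: "nat \<Rightarrow> letter list \<Rightarrow> bool" where
  "valid_word r x \<longleftrightarrow> (\<forall>i. One i \<in> set x \<longrightarrow> 1 \<le> i \<and> i \<le> r)"

fun digit :: "letter \<Rightarrow> nat" where
  "digit (One i) = 1"
| "digit Two = 2"

definition weight :: "letter list \<Rightarrow> nat" where
  "weight x = sum_list (map digit x)"

definition is_one :: "letter \<Rightarrow> bool" where
  "is_one a \<longleftrightarrow> (\<exists>i. a = One i)"

definition num_ones :: "letter list \<Rightarrow> nat" where
  "num_ones x = length (filter is_one x)"

definition down :: "nat \<Rightarrow> letter list \<Rightarrow> letter list \<Rightarrow> bool" where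
  "down r x y \<longleftrightarrow>
     (\<exists>p q i. x = p @ One i # q \<and> (\<forall>a\<in>set p. \<not> is_one a) \<and> y = p @ q)
   \<or> (\<exists>p q j. x = p @ Two # q \<and> (\<forall>a\<in>set p. \<not> is_one a) \<and> 1 \<le> j \<and> j \<le> r
              \<and> y = p @ One j # q)"

definition s_map :: "letter list \<Rightarrow> letter list" where
  "s_map x = map (\<lambda>a. case a of One i \<Rightarrow> One 1 | Two \<Rightarrow> Two) x"

fun lcp :: "letter list \<Rightarrow> letter list \<Rightarrow> nat" where
  "lcp (a # x) (b # y) = (if a = b then Suc (lcp x y) else 0)"
| "lcp _ _ = 0"

definition h :: "letter list \<Rightarrow> letter list \<Rightarrow> nat" where
  "h w v = lcp (rev w) (rev v)"

definition cut :: "letter list \<Rightarrow> nat \<Rightarrow> letter list" where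
  "cut x l = take (length x - l) x"

text \<open>d_r(x,y,l): paths are represented by the list [y_n, ..., y_m] of the
  prefixes (u = common suffix of length l).\<close>
definition d :: "nat \<Rightarrow> letter list \<Rightarrow> letter list \<Rightarrow> nat \<Rightarrow> nat" where
  "d r x y l = (let u = drop (length y - l) y in
     card {ys. ys \<noteq> [] \<and> hd ys = cut y l \<and> last ys = cut x l
              \<and> (\<forall>k. Suc k < length ys \<longrightarrow> down r (ys ! k @ u) (ys ! Suc k @ u))
              \<and> \<not> (\<exists>a. \<forall>z\<in>set ys. z \<noteq> [] \<and> last z = a)})"

end

theory Submission
  imports Defs
begin

definition fo :: "letter list \<Rightarrow> nat" where
  "fo x = length (takeWhile (\<lambda>a. \<not> is_one a) x)"

definition del_at :: "nat \<Rightarrow> letter list \<Rightarrow> letter list" where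
  "del_at k x = take k x @ drop (Suc k) x"

definition sl :: "letter \<Rightarrow> letter" where
  "sl a = (case a of One i \<Rightarrow> One 1 | Two \<Rightarrow> Two)"

lemma s_map_sl: "s_map x = map sl x"
  by (simp add: s_map_def sl_def)

lemma is_one_sl[simp]: "is_one (sl a) = is_one a"
  by (cases a) (auto simp: sl_def is_one_def)

lemma not_one_Two: "\<not> is_one a \<longleftrightarrow> a = Two"
  by (cases a) (auto simp: is_one_def)

lemma is_one_One[simp]: "is_one (One i)" and not_is_one_Two[simp]: "\<not> is_one Two"
  by (auto simp: is_one_def)

lemma fo_le: "fo x \<le> length x"
  unfolding fo_def by (rule length_takeWhile_le)

lemma fo_take: "k \<le> fo x \<Longrightarrow> a \<in> set (take k x) \<Longrightarrow> \<not> is_one a"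
proof -
  assume "k \<le> fo x" "a \<in> set (take k x)"
  then have "a \<in> set (take (fo x) x)" using set_take_subset_set_take[of k "fo x" x] by blast
  moreover have "take (fo x) x = takeWhile (\<lambda>a. \<not> is_one a) x" unfolding fo_def
    by (rule takeWhile_eq_take[symmetric])
  ultimately have "a \<in> set (takeWhile (\<lambda>a. \<not> is_one a) x)" by (simp only:)
  then have "a \<in> set x \<and> \<not> is_one a" by (rule set_takeWhileD)
  then show ?thesis by simp
qed

lemma fo_before: "i < fo x \<Longrightarrow> \<not> is_one (x ! i)"
proof -
  assume i: "i < fo x"
  then have l: "i < length (take (fo x) x)" using fo_le[of x] by simp
  then have "take (fo x) x ! i \<in> set (take (fo x) x)" by (rule nth_mem)
  moreover have "take (fo x) x ! i = x ! i" using i by simp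
  ultimately have "x ! i \<in> set (take (fo x) x)" by (simp only:)
  then show ?thesis using fo_take[of "fo x" x] by blast
qed

lemma fo_at: "fo x < length x \<Longrightarrow> is_one (x ! fo x)"
proof -
  assume h: "fo x < length x"
  have "\<not> \<not> is_one (x ! fo x)" using nth_length_takeWhile[OF h[unfolded fo_def]] unfolding fo_def .
  then show ?thesis by (simp only: not_not)
qed

lemma fo_unique:
  assumes "k \<le> length x" "\<And>i. i < k \<Longrightarrow> \<not> is_one (x ! i)" "k < length x \<Longrightarrow> is_one (x ! k)"
  shows "fo x = k"
proof (rule ccontr)
  assume "fo x \<noteq> k"
  then consider "fo x < k" | "k < fo x" by linarith
  then show False
  proof cases
    case 1 then show ?thesis using assms fo_at[of x] by auto
  next
    case 2 then show ?thesis using assms fo_before[of k x] fo_le[of x] by auto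
  qed
qed

lemma fo_s[simp]: "fo (s_map x) = fo x"
proof -
  have e: "(\<lambda>a. \<not> is_one a) \<circ> sl = (\<lambda>a. \<not> is_one a)" by (rule ext) simp
  show ?thesis unfolding fo_def s_map_sl takeWhile_map e length_map ..
qed

lemma length_s[simp]: "length (s_map x) = length x"
  by (simp add: s_map_def)

lemma s_nth: "k < length x \<Longrightarrow> s_map x ! k = sl (x ! k)"
  by (simp add: s_map_sl)

lemma s_append[simp]: "s_map (x @ y) = s_map x @ s_map y"
  by (simp add: s_map_def)

lemma s_del[simp]: "s_map (del_at k x) = del_at k (s_map x)"
  by (simp add: s_map_sl del_at_def take_map drop_map)

lemma s_upd[simp]: "s_map (x[k := One j]) = (s_map x)[k := One 1]"
  by (simp add: s_map_sl map_update sl_def)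

lemma s_upd2[simp]: "s_map (x[k := Two]) = (s_map x)[k := Two]"
  by (simp add: s_map_sl map_update sl_def)

lemma num_ones_s[simp]: "num_ones (s_map x) = num_ones x"
proof -
  have e: "is_one \<circ> sl = is_one" by (rule ext) simp
  show ?thesis unfolding num_ones_def s_map_sl filter_map e length_map ..
qed

lemma num_ones_0_iff: "num_ones x = 0 \<longleftrightarrow> (\<forall>a\<in>set x. \<not> is_one a)"
  by (simp add: num_ones_def filter_empty_conv)

lemma map_sl_id: "(\<forall>a\<in>set x. \<not> is_one a) \<Longrightarrow> map sl x = x"
proof (induction x)
  case (Cons a x)
  then have "\<not> is_one a" by simp
  then have "a = Two" using not_one_Two by blast
  then have "sl a = a" by (simp add: sl_def)
  then show ?case using Cons by simp
qed simp

lemma num_ones_0_s: "num_ones x = 0 \<Longrightarrow> s_map x = x"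
  unfolding num_ones_0_iff s_map_sl by (rule map_sl_id)

lemma length_del[simp]: "k < length x \<Longrightarrow> length (del_at k x) = length x - 1"
  by (simp add: del_at_def)

lemma num_ones_split: "k < length x \<Longrightarrow>
   num_ones x = num_ones (take k x) + (if is_one (x!k) then 1 else 0) + num_ones (drop (Suc k) x)"
proof -
  assume k: "k < length x"
  have "num_ones x = num_ones (take k x @ x!k # drop (Suc k) x)"
    by (rule arg_cong[OF id_take_nth_drop[OF k]])
  then show ?thesis by (simp add: num_ones_def)
qed

lemma num_ones_del: "k < length x \<Longrightarrow> is_one (x!k) \<Longrightarrow> num_ones (del_at k x) = num_ones x - 1"
  using num_ones_split[of k x] by (simp add: del_at_def num_ones_def)

lemma num_ones_upd: "k < length x \<Longrightarrow> x!k = Two \<Longrightarrow> num_ones (x[k := One j]) = num_ones x + 1"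
  using num_ones_split[of k x] num_ones_split[of k "x[k := One j]"] by simp

lemma sl_cases: "sl a = One 1 \<or> sl a = Two"
  by (cases a) (simp_all add: sl_def)

lemma valid_s: "valid_word 1 (s_map x)"
  unfolding valid_word_def s_map_sl
proof (intro allI impI)
  fix i assume "One i \<in> set (map sl x)"
  then obtain a where "One i = sl a" by auto
  then show "1 \<le> i \<and> i \<le> 1" using sl_cases[of a] by auto
qed

lemma down_iff: "down r x y \<longleftrightarrow>
   (fo x < length x \<and> y = del_at (fo x) x) \<or> (\<exists>k j. k < fo x \<and> 1 \<le> j \<and> j \<le> r \<and> y = x[k := One j])"
proof
  assume "down r x y"
  then show "(fo x < length x \<and> y = del_at (fo x) x) \<or> (\<exists>k j. k < fo x \<and> 1 \<le> j \<and> j \<le> r \<and> y = x[k := One j])"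
    unfolding down_def
  proof (elim disjE exE conjE)
    fix p q i assume h: "x = p @ One i # q" "\<forall>a\<in>set p. \<not> is_one a" "y = p @ q"
    have "fo x = length p" unfolding h(1)
    proof (rule fo_unique)
      fix m assume "m < length p"
      then show "\<not> is_one ((p @ One i # q) ! m)" using h(2) by (simp add: nth_append)
    qed simp_all
    then show ?thesis using h by (auto simp: del_at_def)
  next
    fix p q j assume h: "x = p @ Two # q" "\<forall>a\<in>set p. \<not> is_one a" "1 \<le> j" "j \<le> r" "y = p @ One j # q"
    have "length p < fo x" unfolding fo_def h(1) using h(2) by simp
    moreover have "y = x[length p := One j]" using h by simp
    ultimately show ?thesis using h by blast
  qed
next
  assume "(fo x < length x \<and> y = del_at (fo x) x) \<or> (\<exists>k j. k < fo x \<and> 1 \<le> j \<and> j \<le> r \<and> y = x[k := One j])"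
  then show "down r x y"
  proof (elim disjE exE conjE)
    assume h: "fo x < length x" "y = del_at (fo x) x"
    obtain i where i: "x ! fo x = One i" using fo_at[OF h(1)] by (auto simp: is_one_def)
    have "x = take (fo x) x @ One i # drop (Suc (fo x)) x" by (subst i[symmetric]) (rule id_take_nth_drop[OF h(1)])
    moreover have "\<forall>a\<in>set (take (fo x) x). \<not> is_one a"
      using fo_take by blast
    moreover have "y = take (fo x) x @ drop (Suc (fo x)) x" using h(2) by (simp add: del_at_def)
    ultimately show ?thesis unfolding down_def by blast
  next
    fix k j assume h: "k < fo x" "1 \<le> j" "j \<le> r" "y = x[k := One j]"
    have k: "k < length x" using h fo_le[of x] by linarith
    have "x ! k = Two" using fo_before[OF h(1)] not_one_Two by blast
    then have "x = take k x @ Two # drop (Suc k) x" by (metis id_take_nth_drop[OF k])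
    moreover have "\<forall>a\<in>set (take k x). \<not> is_one a"
      using fo_take h(1) less_imp_le by blast
    moreover have "y = take k x @ One j # drop (Suc k) x" using h k by (simp add: upd_conv_take_nth_drop)
    ultimately show ?thesis unfolding down_def using h by blast
  qed
qed


lemma fo_eq_len: "fo y = length y \<longleftrightarrow> (\<forall>a\<in>set y. \<not> is_one a)"
proof
  assume "fo y = length y"
  then show "\<forall>a\<in>set y. \<not> is_one a" using fo_take[of "length y" y] by simp
next
  assume "\<forall>a\<in>set y. \<not> is_one a"
  then have "takeWhile (\<lambda>a. \<not> is_one a) y = y" by (rule takeWhile_eq_all_conv[THEN iffD2])
  then show "fo y = length y" unfolding fo_def by (simp only:)
qed

lemma fo_append: "fo (y @ u) = (if fo y < length y then fo y else length y + fo u)"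
proof (cases "\<forall>a\<in>set y. \<not> is_one a")
  case True
  then have "fo y = length y" using fo_eq_len by blast
  moreover have "fo (y @ u) = length y + fo u" unfolding fo_def using True by simp
  ultimately show ?thesis by simp
next
  case False
  then have f: "fo y \<noteq> length y" using fo_eq_len by blast
  then have "fo y < length y" using fo_le[of y] by linarith
  moreover have "fo (y @ u) = fo y" unfolding fo_def by (simp only: takeWhile_append if_not_P[OF False])
  ultimately show ?thesis by simp
qed

lemma num_ones_append[simp]: "num_ones (x @ y) = num_ones x + num_ones y"
  by (simp add: num_ones_def)

lemma del_at_append: "k < length y \<Longrightarrow> del_at k (y @ u) = del_at k y @ u"
  by (simp add: del_at_def)

lemma del_at_append2: "length y \<le> k \<Longrightarrow> del_at k (y @ u) = y @ del_at (k - length y) u"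
  by (simp add: del_at_def Suc_diff_le)

lemma down_append: "down r (y @ u) (y' @ u) \<longleftrightarrow> down r y y'"
proof
  assume "down r y y'"
  then consider (d) "fo y < length y" "y' = del_at (fo y) y"
    | (p) k j where "k < fo y" "1 \<le> j" "j \<le> r" "y' = y[k := One j]"
    unfolding down_iff by blast
  then show "down r (y @ u) (y' @ u)"
  proof cases
    case d
    then have "fo (y @ u) = fo y" by (simp add: fo_append)
    moreover have "del_at (fo y) (y @ u) = y' @ u" using d by (simp add: del_at_append)
    ultimately show ?thesis unfolding down_iff using d by simp
  next
    case p
    have k: "k < length y" using p fo_le[of y] by linarith
    have "fo y \<le> fo (y @ u)" using fo_le[of y] by (simp add: fo_append)
    then have "k < fo (y @ u)" using p by linarith
    moreover have "y' @ u = (y @ u)[k := One j]" using p k by (simp add: list_update_append1)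
    ultimately show ?thesis unfolding down_iff using p(2,3) by blast
  qed
next
  assume "down r (y @ u) (y' @ u)"
  then consider (d) "fo (y @ u) < length (y @ u)" "y' @ u = del_at (fo (y @ u)) (y @ u)"
    | (p) k j where "k < fo (y @ u)" "1 \<le> j" "j \<le> r" "y' @ u = (y @ u)[k := One j]"
    unfolding down_iff by blast
  then show "down r y y'"
  proof cases
    case d
    show ?thesis
    proof (cases "fo y < length y")
      case True
      then have "fo (y @ u) = fo y" by (simp add: fo_append)
      then have "y' @ u = del_at (fo y) y @ u" using d True by (simp add: del_at_append)
      then have "y' = del_at (fo y) y" by simp
      then show ?thesis unfolding down_iff using True by simp
    next
      case False
      then have f: "fo y = length y" using fo_le[of y] by linarith
      then have f2: "fo (y @ u) = length y + fo u" by (simp add: fo_append)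
      then have g: "fo u < length u" using d by simp
      have "y' @ u = y @ del_at (fo u) u" using d f2 by (simp add: del_at_append2)
      then have "num_ones (y' @ u) = num_ones (y @ del_at (fo u) u)" by (rule arg_cong)
      then have "num_ones y' + num_ones u = num_ones y + num_ones (del_at (fo u) u)"
        by (simp only: num_ones_append)
      moreover have "num_ones y = 0" using f fo_eq_len num_ones_0_iff by blast
      moreover have "num_ones (del_at (fo u) u) = num_ones u - 1" using g fo_at[OF g] by (simp add: num_ones_del)
      moreover have "num_ones u \<ge> 1"
      proof -
        have "num_ones u = num_ones (take (fo u) u) + 1 + num_ones (drop (Suc (fo u)) u)"
          using num_ones_split[OF g] fo_at[OF g] by simp
        then show ?thesis by linarith
      qed
      ultimately show ?thesis by linarith
    qed
  next
    case p
    show ?thesis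
    proof (cases "k < length y")
      case True
      then have "y' @ u = y[k := One j] @ u" using p by (simp add: list_update_append1)
      then have "y' = y[k := One j]" by simp
      moreover have "k < fo y"
      proof (cases "fo y < length y")
        case True
        then show ?thesis using p by (simp add: fo_append)
      next
        case False
        then show ?thesis using \<open>k < length y\<close> fo_le[of y] by linarith
      qed
      ultimately show ?thesis unfolding down_iff using p by blast
    next
      case False
      have ny: "\<not> fo y < length y"
      proof
        assume a: "fo y < length y"
        then have "fo (y @ u) = fo y" by (simp add: fo_append)
        then show False using p(1) a False by linarith
      qed
      then have f2: "fo (y @ u) = length y + fo u" by (simp add: fo_append)
      have m: "k - length y < fo u" using p(1) f2 False by linarith
      have "y' @ u = y @ u[k - length y := One j]" using p False by (simp add: list_update_append)
      moreover have "length y' = length y"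
      proof -
        have "length (y' @ u) = length (y @ u)" using p by simp
        then show ?thesis by simp
      qed
      ultimately have "u = u[k - length y := One j]" by simp
      then have "u ! (k - length y) = u[k - length y := One j] ! (k - length y)" by (rule arg_cong)
      moreover have "k - length y < length u" using m fo_le[of u] by linarith
      ultimately have "u ! (k - length y) = One j" by simp
      then show ?thesis using fo_before[OF m] by simp
    qed
  qed
qed

fun chain :: "nat \<Rightarrow> letter list list \<Rightarrow> bool" where
  "chain r [] = True"
| "chain r [x] = True"
| "chain r (x # y # ys) = (down r x y \<and> chain r (y # ys))"

lemma all_nat_split: "(\<forall>k::nat. P k) \<longleftrightarrow> P 0 \<and> (\<forall>m. P (Suc m))"
  by (metis not0_implies_Suc)

lemma chain_nth: "chain r ys \<longleftrightarrow> (\<forall>k. Suc k < length ys \<longrightarrow> down r (ys ! k) (ys ! Suc k))"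
proof (induction r ys rule: chain.induct)
  case (3 r x y ys)
  show ?case
    apply (subst all_nat_split)
    using 3 by simp
qed simp_all

lemma chain_Cons: "chain r (x # ys) \<longleftrightarrow> (ys = [] \<or> down r x (hd ys)) \<and> chain r ys"
  by (cases ys) simp_all

lemma chain_snoc: "chain r (ys @ [y]) \<longleftrightarrow> chain r ys \<and> (ys \<noteq> [] \<longrightarrow> down r (last ys) y)"
proof (induction ys)
  case (Cons a ys)
  then show ?case by (cases ys) auto
qed simp

lemma valid_down: "valid_word r x \<Longrightarrow> down r x y \<Longrightarrow> valid_word r y"
proof -
  assume v: "valid_word r x" and "down r x y"
  then consider (d) "y = del_at (fo x) x" | (p) k j where "1 \<le> j" "j \<le> r" "y = x[k := One j]"
    unfolding down_iff by blast
  then show ?thesis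
  proof cases
    case d
    have "set y \<subseteq> set x" unfolding d del_at_def using set_take_subset set_drop_subset by fastforce
    then show ?thesis using v unfolding valid_word_def by blast
  next
    case p
    have "set y \<subseteq> insert (One j) (set x)" unfolding p by (rule set_update_subset_insert)
    then show ?thesis using v p(1,2) unfolding valid_word_def by blast
  qed
qed

lemma down_s: "down r x y \<Longrightarrow> down 1 (s_map x) (s_map y)"
proof -
  assume "down r x y"
  then consider (d) "fo x < length x" "y = del_at (fo x) x" | (p) k j where "k < fo x" "y = x[k := One j]"
    unfolding down_iff by blast
  then show ?thesis
  proof cases
    case d
    have "fo (s_map x) < length (s_map x)" using d(1) by (simp only: fo_s length_s)
    moreover have "s_map y = del_at (fo (s_map x)) (s_map x)" unfolding d(2) by (simp only: fo_s s_del)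
    ultimately show ?thesis unfolding down_iff by (intro disjI1 conjI)
  next
    case p
    have "k < fo (s_map x)" using p(1) by (simp only: fo_s)
    moreover have "s_map y = (s_map x)[k := One 1]" unfolding p(2) by (rule s_upd)
    ultimately have "k < fo (s_map x) \<and> 1 \<le> (1::nat) \<and> (1::nat) \<le> 1 \<and> s_map y = (s_map x)[k := One 1]" by simp
    then show ?thesis unfolding down_iff by (intro disjI2 exI[of _ k] exI[of _ "1::nat"])
  qed
qed

lemma chain_valid: "chain r ys \<Longrightarrow> ys \<noteq> [] \<Longrightarrow> valid_word r (hd ys) \<Longrightarrow> \<forall>z\<in>set ys. valid_word r z"
proof (induction r ys rule: chain.induct)
  case (3 r x y ys)
  have vx: "valid_word r x" using 3(4) by simp
  have d: "down r x y" and c: "chain r (y # ys)" using 3(2) by simp_all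
  have vy: "valid_word r y" using valid_down[OF vx d] .
  have "\<forall>z\<in>set (y # ys). valid_word r z" using 3(1)[OF c] vy by simp
  then show ?case using vx by simp
qed simp_all

lemma chain_s: "chain r ys \<Longrightarrow> chain 1 (map s_map ys)"
proof (induction r ys rule: chain.induct)
  case (3 r x y ys)
  have d: "down r x y" and c: "chain r (y # ys)" using 3(2) by simp_all
  have "down 1 (s_map x) (s_map y)" using down_s[OF d] .
  moreover have "chain 1 (map s_map (y # ys))" using 3(1)[OF c] .
  ultimately show ?case by simp
qed simp_all

lemma step_last:
  assumes "down r x y" "x \<noteq> []" "y \<noteq> []" "last x \<noteq> last y"
  shows "num_ones x = 0 \<or> num_ones y = 0"
proof -
  from assms(1) consider (d) "fo x < length x" "y = del_at (fo x) x" | (p) k j where "k < fo x" "y = x[k := One j]"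
    unfolding down_iff by blast
  then show ?thesis
  proof cases
    case d
    show ?thesis
    proof (cases "fo x = length x - 1")
      case True
      then have "drop (Suc (fo x)) x = []" using d(1) by simp
      then have "y = take (fo x) x" using d(2) by (simp add: del_at_def)
      then have "\<forall>a\<in>set y. \<not> is_one a" using fo_take[of "fo x" x] by simp
      then have "num_ones y = 0" using num_ones_0_iff[of y] by simp
      then show ?thesis by simp
    next
      case False
      then have ne: "drop (Suc (fo x)) x \<noteq> []" using d(1) by simp
      have "last y = last (take (fo x) x @ drop (Suc (fo x)) x)" using d(2) by (simp add: del_at_def)
      also have "\<dots> = last (drop (Suc (fo x)) x)" using ne by (rule last_appendR)
      also have "\<dots> = last x" using ne by (simp add: last_drop)
      finally show ?thesis using assms(4) by simp
    qed
  next
    case p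
    show ?thesis
    proof (cases "k = length x - 1")
      case True
      then have "fo x = length x" using p(1) fo_le[of x] by linarith
      then have "\<forall>a\<in>set x. \<not> is_one a" using fo_eq_len[of x] by simp
      then have "num_ones x = 0" using num_ones_0_iff[of x] by simp
      then show ?thesis by simp
    next
      case False
      have "last y = last x" unfolding p(2) using False assms(2) by (simp add: last_list_update)
      then show ?thesis using assms(4) by simp
    qed
  qed
qed

lemma num_ones_Nil[simp]: "num_ones [] = 0"
  by (simp add: num_ones_def)

lemma chain_last_const:
  "chain r ys \<Longrightarrow> \<forall>z\<in>set ys. num_ones z \<noteq> 0 \<Longrightarrow> \<forall>z\<in>set ys. last z = last (hd ys)"
proof (induction r ys rule: chain.induct)
  case (3 r x y ys)
  have nx: "num_ones x \<noteq> 0" and ny: "num_ones y \<noteq> 0" using 3(3) by simp_all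
  have xn: "x \<noteq> []" using nx by (cases x) auto
  have yn: "y \<noteq> []" using ny by (cases y) auto
  have d: "down r x y" and c: "chain r (y # ys)" using 3(2) by simp_all
  have "\<not> last x \<noteq> last y"
  proof
    assume "last x \<noteq> last y"
    then have "num_ones x = 0 \<or> num_ones y = 0" by (rule step_last[OF d xn yn])
    then show False using nx ny by blast
  qed
  then have l: "last x = last y" by blast
  have "\<forall>z\<in>set (y # ys). num_ones z \<noteq> 0" using 3(3) by simp
  then have "\<forall>z\<in>set (y # ys). last z = last y" using 3(1)[OF c] by simp
  then show ?case using l by simp
qed simp_all

definition cnd :: "letter list list \<Rightarrow> bool" where
  "cnd ys \<longleftrightarrow> \<not> (\<exists>a. \<forall>z\<in>set ys. z \<noteq> [] \<and> last z = a)"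

lemma cnd_zero: "chain r ys \<Longrightarrow> cnd ys \<Longrightarrow> \<exists>z\<in>set ys. num_ones z = 0"
proof (rule ccontr)
  assume c: "chain r ys" "cnd ys" and n: "\<not> (\<exists>z\<in>set ys. num_ones z = 0)"
  then have a: "\<forall>z\<in>set ys. num_ones z \<noteq> 0" by simp
  then have "\<forall>z\<in>set ys. z \<noteq> []" by auto
  moreover have "\<forall>z\<in>set ys. last z = last (hd ys)" using chain_last_const c(1) a by blast
  ultimately show False using c(2) unfolding cnd_def by blast
qed

lemma last_s: "z \<noteq> [] \<Longrightarrow> last (s_map z) = sl (last z)"
  by (simp add: s_map_sl last_map)

lemma s_Nil_iff[simp]: "s_map z = [] \<longleftrightarrow> z = []"
  by (simp add: s_map_def)

lemma cnd_s1: "cnd (map s_map ys) \<Longrightarrow> cnd ys"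
proof -
  assume c: "cnd (map s_map ys)"
  show "cnd ys" unfolding cnd_def
  proof
    assume "\<exists>a. \<forall>z\<in>set ys. z \<noteq> [] \<and> last z = a"
    then obtain a where a: "\<forall>z\<in>set ys. z \<noteq> [] \<and> last z = a" by blast
    then have "\<forall>z\<in>set (map s_map ys). z \<noteq> [] \<and> last z = sl a" using last_s by auto
    then show False using c unfolding cnd_def by blast
  qed
qed

lemma sl_Two: "sl a = Two \<Longrightarrow> a = Two"
  by (cases a) (simp_all add: sl_def)

lemma cnd_s2: "chain r ys \<Longrightarrow> cnd ys \<Longrightarrow> cnd (map s_map ys)"
proof -
  assume ch: "chain r ys" and c: "cnd ys"
  obtain z0 where z0: "z0 \<in> set ys" "num_ones z0 = 0" using cnd_zero[OF ch c] by blast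
  show "cnd (map s_map ys)" unfolding cnd_def
  proof
    assume "\<exists>a. \<forall>z\<in>set (map s_map ys). z \<noteq> [] \<and> last z = a"
    then obtain a where a: "\<forall>z\<in>set ys. s_map z \<noteq> [] \<and> last (s_map z) = a" by auto
    have "z0 \<noteq> []" using a z0(1) by auto
    then have "last z0 \<in> set z0" by simp
    then have "\<not> is_one (last z0)" using z0(2) num_ones_0_iff by blast
    then have "last z0 = Two" using not_one_Two by blast
    then have "a = Two" using a z0(1) last_s[OF \<open>z0 \<noteq> []\<close>] by (simp add: sl_def)
    then have "\<forall>z\<in>set ys. z \<noteq> [] \<and> last z = Two" using a last_s sl_Two by auto
    then show False using c unfolding cnd_def by blast
  qed
qed

definition paths :: "nat \<Rightarrow> letter list \<Rightarrow> letter list \<Rightarrow> letter list list set" where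
  "paths r a b = {ys. ys \<noteq> [] \<and> hd ys = a \<and> last ys = b \<and> chain r ys \<and> cnd ys}"

definition lifts :: "nat \<Rightarrow> letter list \<Rightarrow> letter list list \<Rightarrow> letter list \<Rightarrow> letter list list set" where
  "lifts r a p b = {ys. chain r ys \<and> map s_map ys = p \<and> ys \<noteq> [] \<and> hd ys = a \<and> last ys = b}"

lemma d_reduce:
  assumes "x = X @ u" "y = Y @ u" "length u = l"
  shows "d r x y l = card (paths r Y X)"
proof -
  have u: "drop (length y - l) y = u" using assms by simp
  have cy: "cut y l = Y" "cut x l = X" by (simp_all add: cut_def assms)
  show ?thesis unfolding d_def Let_def u cy paths_def cnd_def chain_nth down_append by (rule refl)
qed

lemma powi_step: "(r::real) \<noteq> 0 \<Longrightarrow> r * r powi (K - 1) = r powi K"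
  using power_int_add_1'[of r "K - 1"] by simp

lemma card_UN_img:
  assumes "finite I" "\<And>i. i \<in> I \<Longrightarrow> finite (L i)" "inj f"
    "\<And>i j. i \<in> I \<Longrightarrow> j \<in> I \<Longrightarrow> i \<noteq> j \<Longrightarrow> L i \<inter> L j = {}"
  shows "card (\<Union>i\<in>I. f ` L i) = (\<Sum>i\<in>I. card (L i))"
proof -
  have "card (\<Union>i\<in>I. f ` L i) = (\<Sum>i\<in>I. card (f ` L i))"
  proof (rule card_UN_disjoint)
    show "finite I" by (rule assms(1))
    show "\<forall>i\<in>I. finite (f ` L i)" using assms(2) by blast
    show "\<forall>i\<in>I. \<forall>j\<in>I. i \<noteq> j \<longrightarrow> f ` L i \<inter> f ` L j = {}"
    proof (intro ballI impI)
      fix i j assume "i \<in> I" "j \<in> I" "i \<noteq> j"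
      then have "L i \<inter> L j = {}" using assms(4) by blast
      then have "f ` (L i \<inter> L j) = {}" by simp
      then show "f ` L i \<inter> f ` L j = {}" using image_Int[OF assms(3)] by metis
    qed
  qed
  also have "\<dots> = (\<Sum>i\<in>I. card (L i))"
  proof (rule sum.cong)
    fix i assume "i \<in> I"
    show "card (f ` L i) = card (L i)" using assms(3) by (simp add: card_image inj_on_subset)
  qed simp
  finally show ?thesis .
qed

lemma lifts_cons:
  assumes "p' \<noteq> []"
  shows "lifts r a (s_map a # p') b = (\<Union>a'\<in>{a'. down r a a' \<and> s_map a' = hd p'}. (\<lambda>ys. a # ys) ` lifts r a' p' b)"
proof (intro equalityI subsetI)
  fix ys assume "ys \<in> lifts r a (s_map a # p') b"
  then have h: "chain r ys" "map s_map ys = s_map a # p'" "ys \<noteq> []" "hd ys = a" "last ys = b"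
    by (simp_all add: lifts_def)
  obtain ys' where ys: "ys = a # ys'" using h(3,4) by (cases ys) auto
  have m: "map s_map ys' = p'" using h(2) ys by simp
  then have ne: "ys' \<noteq> []" using assms by auto
  have c: "down r a (hd ys') \<and> chain r ys'" using h(1) ys ne chain_Cons[of r a ys'] by simp
  have sh: "s_map (hd ys') = hd p'" using m ne by (simp add: hd_map[symmetric])
  have l: "last ys' = b" using h(5) ys ne by simp
  have "ys' \<in> lifts r (hd ys') p' b" using c m ne l by (simp add: lifts_def)
  moreover have "hd ys' \<in> {a'. down r a a' \<and> s_map a' = hd p'}" using c sh by simp
  ultimately show "ys \<in> (\<Union>a'\<in>{a'. down r a a' \<and> s_map a' = hd p'}. (\<lambda>ys. a # ys) ` lifts r a' p' b)"
    unfolding ys by blast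
next
  fix ys assume "ys \<in> (\<Union>a'\<in>{a'. down r a a' \<and> s_map a' = hd p'}. (\<lambda>ys. a # ys) ` lifts r a' p' b)"
  then obtain a' ys' where a': "down r a a'" "s_map a' = hd p'" and ys': "ys' \<in> lifts r a' p' b"
    and ys: "ys = a # ys'" by blast
  have h: "chain r ys'" "map s_map ys' = p'" "ys' \<noteq> []" "hd ys' = a'" "last ys' = b"
    using ys' by (simp_all add: lifts_def)
  have "chain r ys" unfolding ys using chain_Cons[of r a ys'] h a' by simp
  then show "ys \<in> lifts r a (s_map a # p') b" using ys h by (simp add: lifts_def)
qed

lemma lifts_snoc:
  assumes "valid_word r c" "p' \<noteq> []"
  shows "lifts r c (p' @ [s_map b]) b =
    (\<Union>b'\<in>{b'. valid_word r b' \<and> down r b' b \<and> s_map b' = last p'}. (\<lambda>ys. ys @ [b]) ` lifts r c p' b')"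
proof (intro equalityI subsetI)
  fix ys assume "ys \<in> lifts r c (p' @ [s_map b]) b"
  then have h: "chain r ys" "map s_map ys = p' @ [s_map b]" "ys \<noteq> []" "hd ys = c" "last ys = b"
    by (simp_all add: lifts_def)
  obtain ys' y where ys: "ys = ys' @ [y]" using h(3) by (cases ys rule: rev_exhaust) auto
  have yb: "y = b" using h(5) ys by simp
  have m: "map s_map ys' = p'" using h(2) ys by simp
  then have ne: "ys' \<noteq> []" using assms(2) by auto
  have c: "chain r ys' \<and> down r (last ys') b" using h(1) ys ne yb chain_snoc[of r ys' y] by simp
  have sh: "s_map (last ys') = last p'" using m ne by (simp add: last_map[symmetric])
  have hc: "hd ys' = c" using h(4) ys ne by simp
  have "\<forall>z\<in>set ys'. valid_word r z" using chain_valid[of r ys'] c ne hc assms(1) by simp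
  then have v: "valid_word r (last ys')" using ne by simp
  have "ys' \<in> lifts r c p' (last ys')" using c m ne hc by (simp add: lifts_def)
  moreover have "last ys' \<in> {b'. valid_word r b' \<and> down r b' b \<and> s_map b' = last p'}" using c sh v by simp
  ultimately show "ys \<in> (\<Union>b'\<in>{b'. valid_word r b' \<and> down r b' b \<and> s_map b' = last p'}. (\<lambda>ys. ys @ [b]) ` lifts r c p' b')"
    unfolding ys yb by blast
next
  fix ys assume "ys \<in> (\<Union>b'\<in>{b'. valid_word r b' \<and> down r b' b \<and> s_map b' = last p'}. (\<lambda>ys. ys @ [b]) ` lifts r c p' b')"
  then obtain b' ys' where b': "down r b' b" and ys': "ys' \<in> lifts r c p' b'"
    and ys: "ys = ys' @ [b]" by blast
  have h: "chain r ys'" "map s_map ys' = p'" "ys' \<noteq> []" "hd ys' = c" "last ys' = b'"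
    using ys' by (simp_all add: lifts_def)
  have "chain r ys" unfolding ys using chain_snoc[of r ys' b] h b' by simp
  then show "ys \<in> lifts r c (p' @ [s_map b]) b" using ys h by (simp add: lifts_def)
qed

lemma upd_inj:
  assumes "k < fo x" "k' < fo x" "x[k := One i] = x[k' := One j]"
  shows "k = k'"
proof (rule ccontr)
  assume ne: "k \<noteq> k'"
  have kl: "k < length x" using assms(1) fo_le[of x] by linarith
  have "x[k := One i] ! k = One i" using kl by simp
  moreover have "x[k' := One j] ! k = x ! k" using ne by simp
  ultimately have "x ! k = One i" using assms(3) by simp
  then show False using fo_before[OF assms(1)] by simp
qed

lemma N_del:
  assumes "fo a < length a"
  shows "{a'. down r a a' \<and> s_map a' = del_at (fo a) (s_map a)} = {del_at (fo a) a}"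
proof (intro equalityI subsetI)
  fix a' assume "a' \<in> {a'. down r a a' \<and> s_map a' = del_at (fo a) (s_map a)}"
  then have d: "down r a a'" and s: "s_map a' = del_at (fo a) (s_map a)" by simp_all
  have len: "length a' = length a - 1" using arg_cong[OF s, of length] assms by simp
  from d consider (d) "a' = del_at (fo a) a" | (p) k j where "a' = a[k := One j]"
    unfolding down_iff by blast
  then show "a' \<in> {del_at (fo a) a}"
  proof cases
    case d then show ?thesis by simp
  next
    case p
    then have "length a' = length a" by simp
    then show ?thesis using len assms by linarith
  qed
next
  fix a' assume "a' \<in> {del_at (fo a) a}"
  then have a': "a' = del_at (fo a) a" by simp
  have "down r a a'" unfolding down_iff using assms a' by blast
  moreover have "s_map a' = del_at (fo a) (s_map a)" using a' by simp
  ultimately show "a' \<in> {a'. down r a a' \<and> s_map a' = del_at (fo a) (s_map a)}" by simp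
qed

lemma N_rep:
  assumes "k < fo a"
  shows "{a'. down r a a' \<and> s_map a' = (s_map a)[k := One 1]} = (\<lambda>j. a[k := One j]) ` {1..r}"
proof (intro equalityI subsetI)
  fix a' assume "a' \<in> {a'. down r a a' \<and> s_map a' = (s_map a)[k := One 1]}"
  then have d: "down r a a'" and s: "s_map a' = (s_map a)[k := One 1]" by simp_all
  have len: "length a' = length a" using arg_cong[OF s, of length] by simp
  have kl: "k < length a" using assms fo_le[of a] by linarith
  from d consider (d) "fo a < length a" "a' = del_at (fo a) a"
    | (p) k' j where "k' < fo a" "1 \<le> j" "j \<le> r" "a' = a[k' := One j]"
    unfolding down_iff by blast
  then show "a' \<in> (\<lambda>j. a[k := One j]) ` {1..r}"
  proof cases
    case d
    then have "length a' = length a - 1" by simp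
    then show ?thesis using len kl by linarith
  next
    case p
    have "(s_map a)[k' := One 1] = (s_map a)[k := One 1]" using s p(4) by simp
    then have "k' = k" using upd_inj[of k' "s_map a" k 1 1] p(1) assms by simp
    then show ?thesis using p by simp
  qed
next
  fix a' assume "a' \<in> (\<lambda>j. a[k := One j]) ` {1..r}"
  then obtain j where j: "1 \<le> j" "j \<le> r" "a' = a[k := One j]" by auto
  have "down r a a'" unfolding down_iff using assms j by blast
  moreover have "s_map a' = (s_map a)[k := One 1]" using j by simp
  ultimately show "a' \<in> {a'. down r a a' \<and> s_map a' = (s_map a)[k := One 1]}" by simp
qed

lemma inj_rep: "k < length a \<Longrightarrow> inj_on (\<lambda>j. a[k := One j]) A"
proof (rule inj_onI)
  fix i j assume k: "k < length a" and "a[k := One i] = a[k := One j]"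
  then have "a[k := One i] ! k = a[k := One j] ! k" by simp
  then show "i = j" using k by simp
qed

definition ins :: "nat \<Rightarrow> letter \<Rightarrow> letter list \<Rightarrow> letter list" where
  "ins f c b = take f b @ c # drop f b"

lemma take_del: "k \<le> length x \<Longrightarrow> take k (del_at k x) = take k x"
  by (simp add: del_at_def)

lemma drop_del: "k \<le> length x \<Longrightarrow> drop k (del_at k x) = drop (Suc k) x"
  by (simp add: del_at_def)

lemma valid_1_one: "valid_word 1 t \<Longrightarrow> f < length t \<Longrightarrow> is_one (t ! f) \<Longrightarrow> t ! f = One 1"
proof -
  assume v: "valid_word 1 t" and f: "f < length t" and o: "is_one (t ! f)"
  then obtain i where i: "t ! f = One i" by (auto simp: is_one_def)
  have "One i \<in> set t" using f i nth_mem by metis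
  then have "i = 1" using v unfolding valid_word_def by fastforce
  then show ?thesis using i by simp
qed

lemma valid_r_one: "valid_word r t \<Longrightarrow> f < length t \<Longrightarrow> t ! f = One i \<Longrightarrow> 1 \<le> i \<and> i \<le> r"
proof -
  assume v: "valid_word r t" and f: "f < length t" and i: "t ! f = One i"
  have "One i \<in> set t" using f i nth_mem by metis
  then show ?thesis using v unfolding valid_word_def by blast
qed

lemma B_del:
  assumes vt: "valid_word 1 t" and vb: "valid_word r b" and f: "fo t < length t"
    and sb: "s_map b = del_at (fo t) t"
  shows "{b'. valid_word r b' \<and> down r b' b \<and> s_map b' = t} = (\<lambda>i. ins (fo t) (One i) b) ` {1..r}"
proof (intro equalityI subsetI)
  have lb: "length b = length t - 1" using arg_cong[OF sb, of length] f by simp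
  fix b' assume "b' \<in> {b'. valid_word r b' \<and> down r b' b \<and> s_map b' = t}"
  then have v: "valid_word r b'" and d: "down r b' b" and s: "s_map b' = t" by simp_all
  have fb: "fo b' = fo t" using s by (metis fo_s)
  have lb': "length b' = length t" using s by (metis length_s)
  from d consider (d) "b = del_at (fo b') b'" | (p) k j where "b = b'[k := One j]"
    unfolding down_iff by blast
  then show "b' \<in> (\<lambda>i. ins (fo t) (One i) b) ` {1..r}"
  proof cases
    case p
    then have "length b = length b'" by simp
    then show ?thesis using lb lb' f by linarith
  next
    case d
    have fl: "fo t < length b'" using f lb' by simp
    have o: "is_one (b' ! fo t)" using fo_at[of b'] fb fl by simp
    then obtain i where i: "b' ! fo t = One i" by (auto simp: is_one_def)
    have ir: "1 \<le> i \<and> i \<le> r" using valid_r_one[OF v fl i] .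
    have "b' = take (fo t) b' @ b' ! fo t # drop (Suc (fo t)) b'" using id_take_nth_drop[OF fl] .
    also have "\<dots> = take (fo t) b @ One i # drop (fo t) b"
      using d fb fl i take_del[of "fo t" b'] drop_del[of "fo t" b'] by simp
    finally have "b' = ins (fo t) (One i) b" unfolding ins_def .
    then show ?thesis using ir by simp
  qed
next
  have lb: "length b = length t - 1" using arg_cong[OF sb, of length] f by simp
  fix b' assume "b' \<in> (\<lambda>i. ins (fo t) (One i) b) ` {1..r}"
  then obtain i where i: "1 \<le> i" "i \<le> r" "b' = ins (fo t) (One i) b" by auto
  have fl: "fo t \<le> length b" using lb f by linarith
  have "set b' \<subseteq> insert (One i) (set b)" unfolding i(3) ins_def
    using set_take_subset[of "fo t" b] set_drop_subset[of "fo t" b] by auto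
  then have v: "valid_word r b'" using vb i(1,2) unfolding valid_word_def by blast
  have t1: "t ! fo t = One 1" using valid_1_one[OF vt f fo_at[OF f]] .
  have "s_map b' = take (fo t) (s_map b) @ One 1 # drop (fo t) (s_map b)"
    unfolding i(3) ins_def by (simp add: s_map_sl sl_def take_map drop_map)
  also have "\<dots> = take (fo t) t @ t ! fo t # drop (Suc (fo t)) t"
    unfolding sb using t1 f take_del[of "fo t" t] drop_del[of "fo t" t] by simp
  also have "\<dots> = t" using id_take_nth_drop[OF f] by simp
  finally have s: "s_map b' = t" .
  have fb: "fo b' = fo t" using s by (metis fo_s)
  have lb': "length b' = length b + 1" unfolding i(3) ins_def using fl by simp
  have "del_at (fo t) b' = b" unfolding i(3) ins_def del_at_def using fl by simp
  then have "down r b' b" unfolding down_iff using fb lb' fl by simp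
  then show "b' \<in> {b'. valid_word r b' \<and> down r b' b \<and> s_map b' = t}" using v s by simp
qed

lemma inj_ins: "f \<le> length b \<Longrightarrow> inj_on (\<lambda>i. ins f (One i) b) A"
proof (rule inj_onI)
  fix i j assume f: "f \<le> length b" and "ins f (One i) b = ins f (One j) b"
  then have "ins f (One i) b ! f = ins f (One j) b ! f" by simp
  then show "i = j" using f by (simp add: ins_def nth_append)
qed

lemma length_ins: "f \<le> length b \<Longrightarrow> length (ins f c b) = length b + 1"
  by (simp add: ins_def)

lemma B_rep:
  assumes vb: "valid_word r b" and k: "k < fo t" and sb: "s_map b = t[k := One 1]"
  shows "{b'. valid_word r b' \<and> down r b' b \<and> s_map b' = t} = {b[k := Two]}"
proof (intro equalityI subsetI)
  have kt: "k < length t" using k fo_le[of t] by linarith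
  have lb: "length b = length t" using arg_cong[OF sb, of length] by simp
  have tk: "t ! k = Two" using fo_before[OF k] not_one_Two by blast
  fix b' assume "b' \<in> {b'. valid_word r b' \<and> down r b' b \<and> s_map b' = t}"
  then have v: "valid_word r b'" and d: "down r b' b" and s: "s_map b' = t" by simp_all
  have fb: "fo b' = fo t" using s by (metis fo_s)
  have lb': "length b' = length t" using s by (metis length_s)
  from d consider (d) "fo b' < length b'" "b = del_at (fo b') b'" | (p) k' j where "k' < fo b'" "b = b'[k' := One j]"
    unfolding down_iff by blast
  then show "b' \<in> {b[k := Two]}"
  proof cases
    case d
    then have "length b = length b' - 1" by simp
    then show ?thesis using lb lb' kt by linarith
  next
    case p
    have "t[k' := One 1] = t[k := One 1]" using sb p(2) s by simp
    then have kk: "k' = k" using upd_inj[of k' t k 1 1] p(1) fb k by simp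
    have b'k: "b' ! k = Two" using fo_before[of k b'] k fb not_one_Two by simp
    have "b[k := Two] = b'[k := Two]" using p(2) kk by simp
    also have "\<dots> = b'" using b'k list_update_id[of b' k] by simp
    finally show ?thesis by simp
  qed
next
  have kt: "k < length t" using k fo_le[of t] by linarith
  have lb: "length b = length t" using arg_cong[OF sb, of length] by simp
  have tk: "t ! k = Two" using fo_before[OF k] not_one_Two by blast
  fix b' assume "b' \<in> {b[k := Two]}"
  then have b': "b' = b[k := Two]" by simp
  have "set b' \<subseteq> insert Two (set b)" unfolding b' by (rule set_update_subset_insert)
  then have v: "valid_word r b'" using vb unfolding valid_word_def by blast
  have "s_map b' = (t[k := One 1])[k := Two]" unfolding b' using sb by simp
  also have "\<dots> = t[k := Two]" by simp
  also have "\<dots> = t" using tk list_update_id[of t k] by simp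
  finally have s: "s_map b' = t" .
  have fb: "fo b' = fo t" using s by (metis fo_s)
  have "sl (b ! k) = One 1" using s_nth[of k b] sb kt lb by simp
  then obtain j where j: "b ! k = One j" by (cases "b ! k") (simp_all add: sl_def)
  have jr: "1 \<le> j \<and> j \<le> r" using valid_r_one[OF vb _ j] kt lb by simp
  have "b'[k := One j] = b[k := One j]" unfolding b' by simp
  also have "\<dots> = b" using j list_update_id[of b k] by simp
  finally have "b'[k := One j] = b" .
  then have "down r b' b" unfolding down_iff using fb k jr by metis
  then show "b' \<in> {b'. valid_word r b' \<and> down r b' b \<and> s_map b' = t}" using v s by simp
qed

lemma lifts_disj_last: "b1 \<noteq> b2 \<Longrightarrow> lifts r c p b1 \<inter> lifts r c p b2 = {}"
  by (auto simp: lifts_def)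

lemma lifts_disj_hd: "a1 \<noteq> a2 \<Longrightarrow> lifts r a1 p b \<inter> lifts r a2 p b = {}"
  by (auto simp: lifts_def)

lemma card_pos_finite: "0 < real (card A) \<Longrightarrow> finite A"
  using card_ge_0_finite[of A] by simp

lemma real_card_UN:
  assumes "finite I" "\<And>i. i \<in> I \<Longrightarrow> 0 < real (card (L i))" "inj f"
    "\<And>i j. i \<in> I \<Longrightarrow> j \<in> I \<Longrightarrow> i \<noteq> j \<Longrightarrow> L i \<inter> L j = {}"
  shows "real (card (\<Union>i\<in>I. f ` L i)) = (\<Sum>i\<in>I. real (card (L i)))"
proof -
  have "card (\<Union>i\<in>I. f ` L i) = (\<Sum>i\<in>I. card (L i))"
    using card_UN_img[of I L f] assms card_pos_finite by blast
  then show ?thesis by simp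
qed

lemma inj_snoc: "inj (\<lambda>ys. ys @ [b])"
  by (rule injI) simp

lemma inj_cons: "inj (\<lambda>ys. a # ys)"
  by (rule injI) simp

lemma valid_no_ones: "num_ones c = 0 \<Longrightarrow> valid_word r c"
  unfolding valid_word_def using num_ones_0_iff[of c] is_one_One by blast

lemma lifts_single: "num_ones c = 0 \<Longrightarrow> lifts r c [c] c = {[c]}"
proof (intro equalityI subsetI)
  fix ys assume "ys \<in> lifts r c [c] c"
  then have h: "map s_map ys = [c]" "hd ys = c" by (simp_all add: lifts_def)
  then obtain y where "ys = [y]" by (cases ys) auto
  then show "ys \<in> {[c]}" using h by simp
next
  fix ys assume n: "num_ones c = 0" and "ys \<in> {[c]}"
  then have ys: "ys = [c]" by simp
  have "s_map c = c" using n num_ones_0_s by simp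
  then show "ys \<in> lifts r c [c] c" using ys by (simp add: lifts_def)
qed

lemma L2:
  assumes r: "r \<ge> 1"
  shows "num_ones c = 0 \<Longrightarrow> chain 1 p \<Longrightarrow> p \<noteq> [] \<Longrightarrow> hd p = c \<Longrightarrow> \<forall>z\<in>set p. valid_word 1 z
    \<Longrightarrow> valid_word r b \<Longrightarrow> s_map b = last p
    \<Longrightarrow> real (card (lifts r c p b)) = real r powi (int (length c) - int (length b))"
proof (induction p arbitrary: b rule: rev_induct)
  case Nil
  then show ?case by simp
next
  case (snoc t' p')
  have nc: "num_ones c = 0" using snoc.prems(1) .
  have sb: "s_map b = t'" using snoc.prems(7) by simp
  show ?case
  proof (cases "p' = []")
    case True
    then have t': "t' = c" using snoc.prems(4) by simp
    have "num_ones b = 0" using nc sb t' num_ones_s[of b] by simp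
    then have "b = c" using num_ones_0_s[of b] sb t' by simp
    then have "lifts r c (p' @ [t']) b = {[c]}" using True t' lifts_single[OF nc] by simp
    then show ?thesis using \<open>b = c\<close> by simp
  next
    case False
    define t where "t = last p'"
    have cs: "chain 1 p' \<and> down 1 t (s_map b)"
      using snoc.prems(2) chain_snoc[of 1 p' t'] False sb t_def by simp
    have hp: "hd p' = c" using snoc.prems(4) False by simp
    have vp: "\<forall>z\<in>set p'. valid_word 1 z" using snoc.prems(5) by simp
    have vt: "valid_word 1 t" using vp False t_def by simp
    have IH: "\<And>b'. valid_word r b' \<Longrightarrow> s_map b' = t \<Longrightarrow>
        real (card (lifts r c p' b')) = real r powi (int (length c) - int (length b'))"
      using snoc.IH[OF nc _ False hp vp] cs t_def by blast
    have pos: "\<And>b'. valid_word r b' \<Longrightarrow> s_map b' = t \<Longrightarrow> 0 < real (card (lifts r c p' b'))"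
      using IH r by simp
    have dec: "lifts r c (p' @ [t']) b =
        (\<Union>b'\<in>{b'. valid_word r b' \<and> down r b' b \<and> s_map b' = t}. (\<lambda>ys. ys @ [b]) ` lifts r c p' b')"
      using lifts_snoc[OF valid_no_ones[OF nc] False, where b=b] sb t_def by simp
    from cs consider (d) "fo t < length t" "s_map b = del_at (fo t) t"
      | (p) k j where "k < fo t" "1 \<le> j" "j \<le> (1::nat)" "s_map b = t[k := One j]"
      unfolding down_iff by blast
    then show ?thesis
    proof cases
      case d
      let ?B = "(\<lambda>i. ins (fo t) (One i) b) ` {1..r}"
      have B: "{b'. valid_word r b' \<and> down r b' b \<and> s_map b' = t} = ?B"
        using B_del[OF vt snoc.prems(6) d(1) d(2)] .
      have lb: "length b = length t - 1" using arg_cong[OF d(2), of length] d(1) by simp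
      have fl: "fo t \<le> length b" using lb d(1) by linarith
      have memB: "\<And>b'. b' \<in> ?B \<Longrightarrow> valid_word r b' \<and> s_map b' = t" using B by blast
      have "real (card (lifts r c (p' @ [t']) b)) = (\<Sum>b'\<in>?B. real (card (lifts r c p' b')))"
        unfolding dec B
      proof (rule real_card_UN)
        show "finite ?B" by simp
        show "\<And>i. i \<in> ?B \<Longrightarrow> 0 < real (card (lifts r c p' i))" using pos memB by blast
        show "inj (\<lambda>ys. ys @ [b])" by (rule inj_snoc)
        show "\<And>i j. i \<in> ?B \<Longrightarrow> j \<in> ?B \<Longrightarrow> i \<noteq> j \<Longrightarrow> lifts r c p' i \<inter> lifts r c p' j = {}"
          using lifts_disj_last by blast
      qed
      also have "\<dots> = (\<Sum>i\<in>{1..r}. real (card (lifts r c p' (ins (fo t) (One i) b))))"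
        using sum.reindex[OF inj_ins[OF fl], of "\<lambda>b'. real (card (lifts r c p' b'))" "{1..r}"] by simp
      also have "\<dots> = (\<Sum>i\<in>{1..r}. real r powi (int (length c) - int (length b) - 1))"
      proof (rule sum.cong)
        fix i assume "i \<in> {1..r}"
        then have "ins (fo t) (One i) b \<in> ?B" by blast
        then have "real (card (lifts r c p' (ins (fo t) (One i) b))) = real r powi (int (length c) - int (length (ins (fo t) (One i) b)))"
          using IH memB by blast
        then show "real (card (lifts r c p' (ins (fo t) (One i) b))) = real r powi (int (length c) - int (length b) - 1)"
          using length_ins[OF fl] by (simp add: algebra_simps)
      qed simp
      also have "\<dots> = real r * real r powi (int (length c) - int (length b) - 1)" by simp
      also have "\<dots> = real r powi (int (length c) - int (length b))"
        using powi_step[of "real r"] r by simp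
      finally show ?thesis by simp
    next
      case p
      have j: "j = 1" using p(2,3) by simp
      have B: "{b'. valid_word r b' \<and> down r b' b \<and> s_map b' = t} = {b[k := Two]}"
        using B_rep[OF snoc.prems(6) p(1)] p(4) j by simp
      have memB: "valid_word r (b[k := Two]) \<and> s_map (b[k := Two]) = t" using B by blast
      have "real (card (lifts r c (p' @ [t']) b)) = (\<Sum>b'\<in>{b[k := Two]}. real (card (lifts r c p' b')))"
        unfolding dec B
      proof (rule real_card_UN)
        show "\<And>i. i \<in> {b[k := Two]} \<Longrightarrow> 0 < real (card (lifts r c p' i))" using pos memB by blast
        show "inj (\<lambda>ys. ys @ [b])" by (rule inj_snoc)
      qed simp_all
      also have "\<dots> = real r powi (int (length c) - int (length (b[k := Two])))"
        using IH memB by simp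
      finally show ?thesis by simp
    qed
  qed
qed


lemma L1:
  assumes r: "r \<ge> 1"
  shows "valid_word r a \<Longrightarrow> chain 1 p \<Longrightarrow> p \<noteq> [] \<Longrightarrow> hd p = s_map a \<Longrightarrow> \<forall>z\<in>set p. valid_word 1 z
    \<Longrightarrow> (\<exists>z\<in>set p. num_ones z = 0) \<Longrightarrow> valid_word r b \<Longrightarrow> s_map b = last p
    \<Longrightarrow> real (card (lifts r a p b)) = real r powi (int (length a) - int (length b) - int (num_ones a))"
proof (induction p arbitrary: a)
  case Nil
  then show ?case by simp
next
  case (Cons x p')
  have x: "x = s_map a" using Cons.prems(4) by simp
  show ?case
  proof (cases "num_ones a = 0")
    case True
    then have "s_map a = a" by (rule num_ones_0_s)
    then have h: "hd (x # p') = a" using x by simp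
    have "real (card (lifts r a (x # p') b)) = real r powi (int (length a) - int (length b))"
      using L2[OF r True Cons.prems(2,3) h Cons.prems(5,7,8)] .
    then show ?thesis using True by simp
  next
    case False
    have nx: "num_ones x \<noteq> 0" using False x by simp
    have ne: "p' \<noteq> []"
    proof
      assume "p' = []"
      then have "set (x # p') = {x}" by simp
      then show False using Cons.prems(6) nx by (metis singletonD)
    qed
    obtain z0 where z0: "z0 \<in> set (x # p')" "num_ones z0 = 0" using Cons.prems(6) by blast
    have "z0 \<noteq> x" using z0(2) nx by metis
    then have "z0 \<in> set p'" using z0(1) by simp
    then have z: "\<exists>z\<in>set p'. num_ones z = 0" using z0(2) by blast
    have cs: "down 1 x (hd p') \<and> chain 1 p'" using Cons.prems(2) chain_Cons[of 1 x p'] ne by simp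
    have vp: "\<forall>z\<in>set p'. valid_word 1 z" using Cons.prems(5) by simp
    have lb: "s_map b = last p'" using Cons.prems(8) ne by simp
    have IH: "\<And>a'. valid_word r a' \<Longrightarrow> hd p' = s_map a' \<Longrightarrow>
        real (card (lifts r a' p' b)) = real r powi (int (length a') - int (length b) - int (num_ones a'))"
    proof -
      fix a' assume va: "valid_word r a'" and h: "hd p' = s_map a'"
      show "real (card (lifts r a' p' b)) = real r powi (int (length a') - int (length b) - int (num_ones a'))"
        using Cons.IH[OF va conjunct2[OF cs] ne h vp z Cons.prems(7) lb] .
    qed
    have dec: "lifts r a (x # p') b = (\<Union>a'\<in>{a'. down r a a' \<and> s_map a' = hd p'}. (\<lambda>ys. a # ys) ` lifts r a' p' b)"
      unfolding x by (rule lifts_cons[OF ne, where r=r and a=a and b=b])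
    have memN: "\<And>a'. a' \<in> {a'. down r a a' \<and> s_map a' = hd p'} \<Longrightarrow> valid_word r a' \<and> hd p' = s_map a'"
    proof -
      fix a' assume "a' \<in> {a'. down r a a' \<and> s_map a' = hd p'}"
      then have "down r a a'" "s_map a' = hd p'" by simp_all
      then show "valid_word r a' \<and> hd p' = s_map a'" using valid_down[OF Cons.prems(1)] by simp
    qed
    have rp: "0 < real r" using r by simp
    have pos: "\<And>a'. a' \<in> {a'. down r a a' \<and> s_map a' = hd p'} \<Longrightarrow> 0 < real (card (lifts r a' p' b))"
    proof -
      fix a' assume "a' \<in> {a'. down r a a' \<and> s_map a' = hd p'}"
      then have m: "valid_word r a' \<and> hd p' = s_map a'" by (rule memN)
      then have v: "valid_word r a'" and h: "hd p' = s_map a'" by (rule conjunct1, rule conjunct2)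
      have e: "real (card (lifts r a' p' b)) = real r powi (int (length a') - int (length b) - int (num_ones a'))"
        using IH[OF v h] .
      show "0 < real (card (lifts r a' p' b))" unfolding e by (rule zero_less_power_int[OF rp])
    qed
    from cs consider (d) "fo x < length x" "hd p' = del_at (fo x) x"
      | (p) k j where "k < fo x" "1 \<le> j" "j \<le> (1::nat)" "hd p' = x[k := One j]"
      unfolding down_iff by blast
    then show ?thesis
    proof cases
      case d
      have fa: "fo a < length a" using d(1) x by simp
      have N: "{a'. down r a a' \<and> s_map a' = hd p'} = {del_at (fo a) a}"
        using N_del[OF fa, of r] d(2) x by simp
      have "real (card (lifts r a (x # p') b)) = (\<Sum>a'\<in>{del_at (fo a) a}. real (card (lifts r a' p' b)))"
        unfolding dec N
      proof (rule real_card_UN)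
        fix i assume "i \<in> {del_at (fo a) a}"
        then have "i \<in> {a'. down r a a' \<and> s_map a' = hd p'}" unfolding N .
        then show "0 < real (card (lifts r i p' b))" by (rule pos)
      next
        show "inj (\<lambda>ys. a # ys)" by (rule inj_cons)
      qed simp_all
      also have "\<dots> = real (card (lifts r (del_at (fo a) a) p' b))" by simp
      also have "\<dots> = real r powi (int (length (del_at (fo a) a)) - int (length b) - int (num_ones (del_at (fo a) a)))"
      proof -
        have "del_at (fo a) a \<in> {a'. down r a a' \<and> s_map a' = hd p'}" unfolding N by simp
        then have m: "valid_word r (del_at (fo a) a) \<and> hd p' = s_map (del_at (fo a) a)" by (rule memN)
        show ?thesis using IH[OF conjunct1[OF m] conjunct2[OF m]] .
      qed
      also have "\<dots> = real r powi (int (length a) - int (length b) - int (num_ones a))"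
      proof -
        have "num_ones (del_at (fo a) a) = num_ones a - 1" using num_ones_del[OF fa fo_at[OF fa]] .
        moreover have "length (del_at (fo a) a) = length a - 1" using fa by simp
        ultimately have "int (length (del_at (fo a) a)) - int (length b) - int (num_ones (del_at (fo a) a))
            = int (length a) - int (length b) - int (num_ones a)" using fa False by linarith
        then show ?thesis by (simp only:)
      qed
      finally show ?thesis .
    next
      case p
      have j: "j = 1" using p(2,3) by simp
      have ka: "k < fo a" using p(1) x by simp
      have kl: "k < length a" using ka fo_le[of a] by linarith
      have ak: "a ! k = Two" using fo_before[OF ka] not_one_Two by blast
      let ?N = "(\<lambda>j. a[k := One j]) ` {1..r}"
      have N: "{a'. down r a a' \<and> s_map a' = hd p'} = ?N"
        using N_rep[OF ka, of r] p(4) j x by simp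
      have "real (card (lifts r a (x # p') b)) = (\<Sum>a'\<in>?N. real (card (lifts r a' p' b)))"
        unfolding dec N
      proof (rule real_card_UN)
        show "finite ?N" by simp
        fix i assume "i \<in> ?N"
        then have "i \<in> {a'. down r a a' \<and> s_map a' = hd p'}" unfolding N .
        then show "0 < real (card (lifts r i p' b))" by (rule pos)
      next
        show "inj (\<lambda>ys. a # ys)" by (rule inj_cons)
        show "\<And>i j. i \<in> ?N \<Longrightarrow> j \<in> ?N \<Longrightarrow> i \<noteq> j \<Longrightarrow> lifts r i p' b \<inter> lifts r j p' b = {}"
          using lifts_disj_hd by blast
      qed
      also have "\<dots> = (\<Sum>i\<in>{1..r}. real (card (lifts r (a[k := One i]) p' b)))"
        using sum.reindex[OF inj_rep[OF kl], of "\<lambda>a'. real (card (lifts r a' p' b))" "{1..r}"] by simp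
      also have "\<dots> = (\<Sum>i\<in>{1..r}. real r powi (int (length a) - int (length b) - int (num_ones a) - 1))"
      proof (rule sum.cong)
        fix i assume "i \<in> {1..r}"
        then have "a[k := One i] \<in> ?N" by blast
        then have "a[k := One i] \<in> {a'. down r a a' \<and> s_map a' = hd p'}" unfolding N .
        then have m: "valid_word r (a[k := One i]) \<and> hd p' = s_map (a[k := One i])" by (rule memN)
        have "real (card (lifts r (a[k := One i]) p' b)) = real r powi (int (length (a[k := One i])) - int (length b) - int (num_ones (a[k := One i])))"
          using IH[OF conjunct1[OF m] conjunct2[OF m]] .
        then show "real (card (lifts r (a[k := One i]) p' b)) = real r powi (int (length a) - int (length b) - int (num_ones a) - 1)"
          using num_ones_upd[OF kl ak, of i] by (simp add: algebra_simps)
      qed simp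
      also have "\<dots> = real r * real r powi (int (length a) - int (length b) - int (num_ones a) - 1)" by simp
      also have "\<dots> = real r powi (int (length a) - int (length b) - int (num_ones a))"
        using powi_step[of "real r"] r by simp
      finally show ?thesis .
    qed
  qed
qed


lemma lcp_take: "l \<le> lcp x y \<Longrightarrow> take l x = take l y \<and> l \<le> length x \<and> l \<le> length y"
proof (induction x y arbitrary: l rule: lcp.induct)
  case (1 a x b y)
  show ?case
  proof (cases l)
    case 0
    then show ?thesis by simp
  next
    case (Suc m)
    have ab: "a = b"
    proof (rule ccontr)
      assume "a \<noteq> b"
      then have "lcp (a # x) (b # y) = 0" by simp
      then show False using 1(2) Suc by simp
    qed
    then have m: "m \<le> lcp x y" using 1(2) Suc by simp
    have "take m x = take m y \<and> m \<le> length x \<and> m \<le> length y" using 1(1)[OF ab m] .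
    then show ?thesis using Suc ab by simp
  qed
qed simp_all

lemma valid_subset: "set x \<subseteq> set y \<Longrightarrow> valid_word r y \<Longrightarrow> valid_word r x"
  unfolding valid_word_def by blast

lemma main_count:
  assumes r: "r \<ge> 1" and vA: "valid_word r A" and vB: "valid_word r B"
  shows "real (card (paths r A B)) = real (card (paths 1 (s_map A) (s_map B)))
           * real r powi (int (length A) - int (length B) - int (num_ones A))"
proof -
  define P1 where "P1 = paths 1 (s_map A) (s_map B)"
  define K where "K = int (length A) - int (length B) - int (num_ones A)"
  have rp: "0 < real r" using r by simp
  have L: "\<And>p. p \<in> P1 \<Longrightarrow> real (card (lifts r A p B)) = real r powi K"
  proof -
    fix p assume "p \<in> P1"
    then have h: "p \<noteq> []" "hd p = s_map A" "last p = s_map B" "chain 1 p" "cnd p"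
      by (simp_all add: paths_def P1_def)
    have "valid_word 1 (hd p)" using h(2) valid_s[of A] by simp
    then have vp: "\<forall>z\<in>set p. valid_word 1 z" using chain_valid[OF h(4) h(1)] by blast
    have z: "\<exists>z\<in>set p. num_ones z = 0" by (rule cnd_zero[OF h(4) h(5)])
    show "real (card (lifts r A p B)) = real r powi K"
      unfolding K_def using L1[OF r vA h(4) h(1) h(2) vp z vB h(3)[symmetric]] .
  qed
  have pos: "\<And>p. p \<in> P1 \<Longrightarrow> 0 < real (card (lifts r A p B))"
  proof -
    fix p assume "p \<in> P1"
    then have e: "real (card (lifts r A p B)) = real r powi K" by (rule L)
    show "0 < real (card (lifts r A p B))" unfolding e by (rule zero_less_power_int[OF rp])
  qed
  have U: "paths r A B = (\<Union>p\<in>P1. lifts r A p B)"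
  proof (intro equalityI subsetI)
    fix ys assume "ys \<in> paths r A B"
    then have h: "ys \<noteq> []" "hd ys = A" "last ys = B" "chain r ys" "cnd ys" by (simp_all add: paths_def)
    have "map s_map ys \<noteq> []" using h(1) by simp
    moreover have "hd (map s_map ys) = s_map A" using h(1,2) by (simp add: hd_map)
    moreover have "last (map s_map ys) = s_map B" using h(1,3) by (simp add: last_map)
    moreover have "chain 1 (map s_map ys)" by (rule chain_s[OF h(4)])
    moreover have "cnd (map s_map ys)" by (rule cnd_s2[OF h(4) h(5)])
    ultimately have "map s_map ys \<in> P1" unfolding P1_def paths_def by blast
    moreover have "ys \<in> lifts r A (map s_map ys) B" using h by (simp add: lifts_def)
    ultimately show "ys \<in> (\<Union>p\<in>P1. lifts r A p B)" by blast
  next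
    fix ys assume "ys \<in> (\<Union>p\<in>P1. lifts r A p B)"
    then obtain p where p: "p \<in> P1" "ys \<in> lifts r A p B" by blast
    have cp: "cnd p" using p(1) by (simp add: paths_def P1_def)
    have h: "chain r ys" "map s_map ys = p" "ys \<noteq> []" "hd ys = A" "last ys = B"
      using p(2) by (simp_all add: lifts_def)
    have "cnd ys" using cnd_s1[of ys] cp h(2) by simp
    then show "ys \<in> paths r A B" using h by (simp add: paths_def)
  qed
  show ?thesis
  proof (cases "finite P1")
    case True
    have fin: "\<forall>p\<in>P1. finite (lifts r A p B)" using pos card_pos_finite by blast
    have dis: "\<forall>p\<in>P1. \<forall>q\<in>P1. p \<noteq> q \<longrightarrow> lifts r A p B \<inter> lifts r A q B = {}"
      by (auto simp: lifts_def)
    have "card (paths r A B) = (\<Sum>p\<in>P1. card (lifts r A p B))"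
      unfolding U by (rule card_UN_disjoint[OF True fin dis])
    then have "real (card (paths r A B)) = (\<Sum>p\<in>P1. real (card (lifts r A p B)))" by simp
    also have "\<dots> = (\<Sum>p\<in>P1. real r powi K)" by (rule sum.cong) (simp_all add: L)
    also have "\<dots> = real (card P1) * real r powi K" by simp
    finally show ?thesis unfolding P1_def K_def .
  next
    case False
    have "infinite (paths r A B)"
    proof
      assume f: "finite (paths r A B)"
      have "P1 \<subseteq> map s_map ` paths r A B"
      proof
        fix p assume pp: "p \<in> P1"
        then have "card (lifts r A p B) \<noteq> 0" using pos[OF pp] by simp
        then obtain ys where ys: "ys \<in> lifts r A p B" by fastforce
        then have "map s_map ys = p" by (simp add: lifts_def)
        moreover have "ys \<in> paths r A B" unfolding U using pp ys by blast
        ultimately show "p \<in> map s_map ` paths r A B" by blast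
      qed
      then have "finite P1" using f finite_surj by blast
      then show False using False by simp
    qed
    then show ?thesis using False unfolding P1_def by simp
  qed
qed

theorem mainTheorem5:
  fixes r l :: nat and w v :: "letter list"
  assumes "r \<ge> 1" and "valid_word r w" and "valid_word r v" and "h w v \<ge> l"
  shows "real (d r w v l) = real (d 1 (s_map w) (s_map v) l)
           * (real r) powi (int (length v) - int (length w) - int (num_ones (cut v l)))"
proof -
  have lt: "take l (rev w) = take l (rev v) \<and> l \<le> length (rev w) \<and> l \<le> length (rev v)"
    using lcp_take[of l "rev w" "rev v"] assms(4) unfolding h_def by simp
  define u where "u = drop (length w - l) w"
  define A where "A = take (length v - l) v"
  define B where "B = take (length w - l) w"
  have "rev (drop (length w - l) w) = rev (drop (length v - l) v)" using lt by (simp add: take_rev)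
  then have u2: "drop (length v - l) v = u" unfolding u_def by simp
  have v: "v = A @ u" unfolding A_def u2[symmetric] by simp
  have w: "w = B @ u" unfolding B_def u_def by simp
  have lu: "length u = l" using lt unfolding u_def by simp
  have vA: "valid_word r A" using valid_subset[OF _ assms(3)] unfolding A_def by (simp add: set_take_subset)
  have vB: "valid_word r B" using valid_subset[OF _ assms(2)] unfolding B_def by (simp add: set_take_subset)
  have d1: "d r w v l = card (paths r A B)" by (rule d_reduce[OF w v lu])
  have sw: "s_map w = s_map B @ s_map u" using w by simp
  have sv: "s_map v = s_map A @ s_map u" using v by simp
  have slu: "length (s_map u) = l" using lu by simp
  have d2: "d 1 (s_map w) (s_map v) l = card (paths 1 (s_map A) (s_map B))" by (rule d_reduce[OF sw sv slu])
  have c: "cut v l = A" unfolding cut_def A_def ..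
  have e: "int (length v) - int (length w) - int (num_ones (cut v l))
      = int (length A) - int (length B) - int (num_ones A)" using v w c by simp
  show ?thesis unfolding d1 d2 e using main_count[OF assms(1) vA vB] .
qed

end
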